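(* Let $D$ be a quiver with $V(D)\neq\emptyset$, and let $L(D)$ be its loading. Define $j_{D,V} : V(D)\to V(L(D))$ by $j_{D,V}(v)=v$ and $j_{D,E} : E(D)\to E(L(D))$ by $j_{D,E}(e)=(0,e)$. Then $j_D := (j_{D,V},j_{D,E})$ is a mono-essential quiver homomorphism, and $L(D)$ equipped with $j_D$ is a mono-injective envelope of $D$ in $\mathbf{Quiv}$.
   Context: A quiver is a quadruple $(V,E,\sigma,\tau)$ with $V,E$ sets and $\sigma,\tau : E \to V$ functions (source and target). A quiver homomorphism is a pair of functions on vertices and edges commuting with sources and targets; $\mathbf{Quiv}$ is the category of quivers and these homomorphisms. A homomorphism is monic iff its vertex and edge maps are both injective. For $v,w\in V(D)$, $\mathrm{edges}_D(v,w):=\sigma_D^{-1}(v)\cap\tau_D^{-1}(w)$. The loading $L(D)$ of $D$ has vertex set $V(D)$, edge set $\{(0,e): e\in E(D)\}\cup\{(1,v,w): v,w\in V(D),\ \mathrm{edges}_D(v,w)=\emptyset\}$, with source and target $\sigma(0,e)=\sigma_D(e)$, $\tau(0,e)=\tau_D(e)$, $\sigma(1,v,w)=v$, $\tau(1,v,w)=w$. A quiver $J$ is mono-injective if for every monic $\phi: A\to B$ and every $\psi: A\to J$ there exists $\hat\psi : B\to J$ with $\hat\psi\circ\phi=\psi$. A monic $\varphi : D\to C$ is mono-essential if for every quiver $A$ and homomorphism $\alpha: C\to A$, $\alpha\circ\varphi$ monic implies $\alpha$ monic. A mono-injective envelope of $D$ is a mono-injective quiver $C$ together with a mono-essential homomorphism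 $D\to C$. *)

theory Defs
  imports Main
begin

record ('v, 'e) quiver =
  verts :: "'v set"
  arcs  :: "'e set"
  src   :: "'e \<Rightarrow> 'v"
  tgt   :: "'e \<Rightarrow> 'v"

definition quiver :: "('v, 'e) quiver \<Rightarrow> bool" where
  "quiver D \<longleftrightarrow> (\<forall>e\<in>arcs D. src D e \<in> verts D \<and> tgt D e \<in> verts D)"

type_synonym ('v1, 'e1, 'v2, 'e2) qmap = "('v1 \<Rightarrow> 'v2) \<times> ('e1 \<Rightarrow> 'e2)"

definition qhom :: "('v1, 'e1) quiver \<Rightarrow> ('v2, 'e2) quiver \<Rightarrow> ('v1, 'e1, 'v2, 'e2) qmap \<Rightarrow> bool" where
  "qhom D C f \<longleftrightarrow> quiver D \<and> quiver C \<and>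
     (\<forall>v\<in>verts D. fst f v \<in> verts C) \<and>
     (\<forall>e\<in>arcs D. snd f e \<in> arcs C \<and> src C (snd f e) = fst f (src D e)
                   \<and> tgt C (snd f e) = fst f (tgt D e))"

definition qcomp :: "('v2, 'e2, 'v3, 'e3) qmap \<Rightarrow> ('v1, 'e1, 'v2, 'e2) qmap \<Rightarrow> ('v1, 'e1, 'v3, 'e3) qmap" where
  "qcomp g f = (fst g \<circ> fst f, snd g \<circ> snd f)"

definition monic :: "('v1, 'e1) quiver \<Rightarrow> ('v2, 'e2) quiver \<Rightarrow> ('v1, 'e1, 'v2, 'e2) qmap \<Rightarrow> bool" where
  "monic D C f \<longleftrightarrow> qhom D C f \<and> inj_on (fst f) (verts D) \<and> inj_on (snd f) (arcs D)"

text \<open>Mono-injectivity. Quantification over all quivers A, B is over quivers whose vertex/edge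
  types are given by the type arguments; a theorem stated with free type variables holds for all types.\<close>
definition mono_injective ::
  "'va itself \<Rightarrow> 'ea itself \<Rightarrow> 'vb itself \<Rightarrow> 'eb itself \<Rightarrow> ('v, 'e) quiver \<Rightarrow> bool" where
  "mono_injective _ _ _ _ J \<longleftrightarrow> quiver J \<and>
     (\<forall>(A :: ('va, 'ea) quiver) (B :: ('vb, 'eb) quiver) \<phi> \<psi>.
        monic A B \<phi> \<and> qhom A J \<psi> \<longrightarrow>
        (\<exists>\<psi>'. qhom B J \<psi>' \<and>
              (\<forall>v\<in>verts A. fst (qcomp \<psi>' \<phi>) v = fst \<psi> v) \<and>
              (\<forall>e\<in>arcs A. snd (qcomp \<psi>' \<phi>) e = snd \<psi> e)))"

definition mono_essential ::
  "'va itself \<Rightarrow> 'ea itself \<Rightarrow> ('v1, 'e1) quiver \<Rightarrow> ('v2, 'e2) quiver \<Rightarrow> ('v1, 'e1, 'v2, 'e2) qmap \<Rightarrow> bool" where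
  "mono_essential _ _ D C \<phi> \<longleftrightarrow> monic D C \<phi> \<and>
     (\<forall>(A :: ('va, 'ea) quiver) \<alpha>. qhom C A \<alpha> \<and> monic D A (qcomp \<alpha> \<phi>) \<longrightarrow> monic C A \<alpha>)"

definition mono_injective_envelope ::
  "'va itself \<Rightarrow> 'ea itself \<Rightarrow> 'vb itself \<Rightarrow> 'eb itself \<Rightarrow> 'vc itself \<Rightarrow> 'ec itself \<Rightarrow>
   ('v1, 'e1) quiver \<Rightarrow> ('v2, 'e2) quiver \<Rightarrow> ('v1, 'e1, 'v2, 'e2) qmap \<Rightarrow> bool" where
  "mono_injective_envelope ta tb tc td te tf D C \<phi> \<longleftrightarrow>
     mono_injective ta tb tc td C \<and> mono_essential te tf D C \<phi>"

definition edges :: "('v, 'e) quiver \<Rightarrow> 'v \<Rightarrow> 'v \<Rightarrow> 'e set" where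
  "edges D v w = {e \<in> arcs D. src D e = v \<and> tgt D e = w}"

text \<open>Loading: edge (0,e) is Inl e, edge (1,v,w) is Inr (v,w).\<close>
definition loading :: "('v, 'e) quiver \<Rightarrow> ('v, 'e + ('v \<times> 'v)) quiver" where
  "loading D = \<lparr> verts = verts D,
     arcs = Inl ` arcs D \<union> {Inr (v, w) | v w. v \<in> verts D \<and> w \<in> verts D \<and> edges D v w = {}},
     src = (\<lambda>x. case x of Inl e \<Rightarrow> src D e | Inr p \<Rightarrow> fst p),
     tgt = (\<lambda>x. case x of Inl e \<Rightarrow> tgt D e | Inr p \<Rightarrow> snd p) \<rparr>"

definition jmap :: "('v, 'e) quiver \<Rightarrow> ('v, 'e, 'v, 'e + ('v \<times> 'v)) qmap" where
  "jmap D = (\<lambda>v. v, Inl)"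

end

theory Submission
  imports Defs
begin

definition pick :: "('v, 'e) quiver \<Rightarrow> 'v \<Rightarrow> 'v \<Rightarrow> 'e + ('v \<times> 'v)" where
  "pick D v w = (if edges D v w \<noteq> {} then Inl (SOME e. e \<in> edges D v w) else Inr (v, w))"

lemma pick_ok:
  assumes "v \<in> verts D" "w \<in> verts D"
  shows "pick D v w \<in> arcs (loading D) \<and> src (loading D) (pick D v w) = v
         \<and> tgt (loading D) (pick D v w) = w"
proof (cases "edges D v w = {}")
  case True thus ?thesis using assms by (auto simp: pick_def loading_def)
next
  case False
  then have "(SOME e. e \<in> edges D v w) \<in> edges D v w" by (meson ex_in_conv someI_ex)
  thus ?thesis using False by (auto simp: pick_def loading_def edges_def)
qed

lemma quiver_loading: "quiver D \<Longrightarrow> quiver (loading D)"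
  unfolding quiver_def loading_def by auto

lemma hom_j: "quiver D \<Longrightarrow> qhom D (loading D) (jmap D)"
proof -
  assume q: "quiver D"
  show ?thesis unfolding qhom_def jmap_def
    using q quiver_loading[OF q] by (auto simp: loading_def quiver_def)
qed

lemma ess: "quiver D \<Longrightarrow> mono_essential TYPE('va) TYPE('ea) D (loading D) (jmap D)"
  unfolding mono_essential_def
proof (intro conjI allI impI)
  assume q: "quiver D"
  show "monic D (loading D) (jmap D)"
    using hom_j[OF q] by (auto simp: monic_def jmap_def)
  fix A :: "('va,'ea) quiver" and \<alpha>
  assume h: "qhom (loading D) A \<alpha> \<and> monic D A (qcomp \<alpha> (jmap D))"
  then have iv: "inj_on (fst \<alpha>) (verts D)" and ie: "inj_on (snd \<alpha> \<circ> Inl) (arcs D)"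
    by (auto simp: monic_def qcomp_def jmap_def comp_def)
  have ha: "\<And>x. x \<in> arcs (loading D) \<Longrightarrow> src A (snd \<alpha> x) = fst \<alpha> (src (loading D) x)
      \<and> tgt A (snd \<alpha> x) = fst \<alpha> (tgt (loading D) x)"
    using h by (auto simp: qhom_def)
  have "inj_on (snd \<alpha>) (arcs (loading D))"
  proof (rule inj_onI)
    fix x y assume x: "x \<in> arcs (loading D)" and y: "y \<in> arcs (loading D)"
      and eq: "snd \<alpha> x = snd \<alpha> y"
    have s: "fst \<alpha> (src (loading D) x) = fst \<alpha> (src (loading D) y)"
      and t: "fst \<alpha> (tgt (loading D) x) = fst \<alpha> (tgt (loading D) y)"
      using ha[OF x] ha[OF y] eq by auto
    have vs: "src (loading D) x \<in> verts D" "src (loading D) y \<in> verts D"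
      "tgt (loading D) x \<in> verts D" "tgt (loading D) y \<in> verts D"
      using quiver_loading[OF q] x y by (auto simp: quiver_def loading_def)
    have s': "src (loading D) x = src (loading D) y" and t': "tgt (loading D) x = tgt (loading D) y"
      using inj_onD[OF iv s] inj_onD[OF iv t] vs by auto
    show "x = y"
    proof (cases x)
      case (Inl a)
      show ?thesis
      proof (cases y)
        case (Inl b)
        thus ?thesis using \<open>x = Inl a\<close> x y eq inj_onD[OF ie, of a b]
          by (auto simp: loading_def)
      next
        case (Inr p)
        thus ?thesis using \<open>x = Inl a\<close> x y s' t'
          by (auto simp: loading_def edges_def)
      qed
    next
      case (Inr p)
      show ?thesis
      proof (cases y)
        case (Inl b)
        thus ?thesis using \<open>x = Inr p\<close> x y s' t'
          by (auto simp: loading_def edges_def)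
      next
        case (Inr r)
        thus ?thesis using \<open>x = Inr p\<close> s' t' by (auto simp: loading_def prod_eq_iff)
      qed
    qed
  qed
  moreover have "inj_on (fst \<alpha>) (verts (loading D))" using iv by (simp add: loading_def)
  ultimately show "monic (loading D) A \<alpha>" using h by (simp add: monic_def)
qed

lemma inj_loading:
  assumes q: "quiver D" and ne: "verts D \<noteq> {}"
  shows "mono_injective TYPE('xa) TYPE('ya) TYPE('xb) TYPE('yb) (loading D)"
  unfolding mono_injective_def
proof (intro conjI allI impI)
  show "quiver (loading D)" using q by (rule quiver_loading)
  fix A :: "('xa,'ya) quiver" and B :: "('xb,'yb) quiver" and \<phi> \<psi>
  assume h: "monic A B \<phi> \<and> qhom A (loading D) \<psi>"
  obtain v0 where v0: "v0 \<in> verts D" using ne by auto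
  define f where "f v = (if v \<in> fst \<phi> ` verts A then fst \<psi> (inv_into (verts A) (fst \<phi>) v) else v0)" for v
  define g where "g e = (if e \<in> snd \<phi> ` arcs A then snd \<psi> (inv_into (arcs A) (snd \<phi>) e)
      else pick D (f (src B e)) (f (tgt B e)))" for e
  have iv: "inj_on (fst \<phi>) (verts A)" and ie: "inj_on (snd \<phi>) (arcs A)"
    and hp: "qhom A B \<phi>" and hs: "qhom A (loading D) \<psi>" using h by (auto simp: monic_def)
  have fA: "\<And>v. v \<in> verts A \<Longrightarrow> f (fst \<phi> v) = fst \<psi> v"
    using iv by (auto simp: f_def)
  have gA: "\<And>e. e \<in> arcs A \<Longrightarrow> g (snd \<phi> e) = snd \<psi> e"
    using ie by (auto simp: g_def)
  have fV: "\<And>v. f v \<in> verts D"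
    using hs v0 by (auto simp: f_def qhom_def loading_def inv_into_into)
  have "qhom B (loading D) (f, g)"
    unfolding qhom_def
  proof (intro conjI ballI)
    show "quiver B" using hp by (simp add: qhom_def)
    show "quiver (loading D)" using q by (rule quiver_loading)
    fix v show "fst (f, g) v \<in> verts (loading D)" using fV by (simp add: loading_def)
  next
    fix e assume e: "e \<in> arcs B"
    have "snd (f, g) e \<in> arcs (loading D) \<and> src (loading D) (snd (f, g) e) = fst (f, g) (src B e) \<and>
        tgt (loading D) (snd (f, g) e) = fst (f, g) (tgt B e)"
    proof (cases "e \<in> snd \<phi> ` arcs A")
      case True
      then obtain a where a: "a \<in> arcs A" "e = snd \<phi> a" by auto
      have "src B e = fst \<phi> (src A a)" "tgt B e = fst \<phi> (tgt A a)"
        "src A a \<in> verts A" "tgt A a \<in> verts A"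
        using hp a by (auto simp: qhom_def quiver_def)
      thus ?thesis using a gA fA hs by (auto simp: qhom_def)
    next
      case False
      thus ?thesis using pick_ok[OF fV fV] by (simp add: g_def)
    qed
    thus "snd (f, g) e \<in> arcs (loading D)" "src (loading D) (snd (f, g) e) = fst (f, g) (src B e)"
      "tgt (loading D) (snd (f, g) e) = fst (f, g) (tgt B e)" by auto
  qed
  thus "\<exists>\<psi>'. qhom B (loading D) \<psi>' \<and>
              (\<forall>v\<in>verts A. fst (qcomp \<psi>' \<phi>) v = fst \<psi> v) \<and>
              (\<forall>e\<in>arcs A. snd (qcomp \<psi>' \<phi>) e = snd \<psi> e)"
    using fA gA by (intro exI[of _ "(f, g)"]) (simp add: qcomp_def)
qed

theorem mainTheorem5:
  fixes D :: "('v, 'e) quiver"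
  assumes "quiver D" and "verts D \<noteq> {}"
  shows "qhom D (loading D) (jmap D)
         \<and> mono_essential TYPE('va) TYPE('ea) D (loading D) (jmap D)
         \<and> mono_injective_envelope TYPE('xa) TYPE('ya) TYPE('xb) TYPE('yb) TYPE('va) TYPE('ea)
             D (loading D) (jmap D)"
  using hom_j[OF assms(1)] ess[OF assms(1)] inj_loading[OF assms]
  by (simp add: mono_injective_envelope_def)

end
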